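(* Let $n$ be a positive integer and $i,k\in\{1,\ldots,n\}$. Let $H\sim\text{Hyp}(n,i,k)$ and $X\sim\text{Bin}(k,\frac{i}{n})$, and assume that: (1) $\frac{ik}{n}\in (m-1, m]$ for some integer $m\in \{2,3,\ldots, \min\{i,k\}-2\}$; (2) $\frac{(n-i)(n-k)}{n}> 1$. Then \[ \frac{\mathbb{P}(H=m)}{\mathbb{P}(X=m)} \,\ge\, \frac{e^{-1/8}}{2} \cdot \sqrt{\frac{i(n-i)(n-k)}{(i-m)(n-i-k+m)n}}. \]
   Context: $\text{Hyp}(n,i,k)$ denotes the hypergeometric distribution: the number of black marbles in a sample without replacement of size $k$ from an urn with $i$ black and $n-i$ white marbles, i.e. $\mathbb{P}(H=j)=\binom{i}{j}\binom{n-i}{k-j}/\binom{n}{k}$. $\text{Bin}(k,p)$ denotes the binomial distribution with $k$ trials and success probability $p$. *)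

theory Defs
  imports "HOL-Probability.Probability"
begin

definition hyp_prob :: "nat \<Rightarrow> nat \<Rightarrow> nat \<Rightarrow> nat \<Rightarrow> real" where
  "hyp_prob n i k j = real ((i choose j) * ((n - i) choose (k - j))) / real (n choose k)"

end

theory Submission
  imports Defs
begin
lemma ln_lower2:
  fixes x :: real assumes "0 \<le> x" shows "2*x/(2+x) \<le> ln (1+x)"
proof -
  let ?f = "\<lambda>x::real. ln (1+x) - 2*x/(2+x)"
  have "?f 0 \<le> ?f x"
  proof (rule DERIV_nonneg_imp_nondecreasing[OF assms])
    fix y :: real assume y0: "0 \<le> y" and "y \<le> x"
    have y: "0 \<le> y \<and> y \<le> x" using y0 \<open>y \<le> x\<close> by simp
    have "(?f has_real_derivative (y^2/((1+y)*(2+y)^2))) (at y)"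
      using y apply (auto intro!: derivative_eq_intros)
      apply (subgoal_tac "1+y > 0 \<and> 2+y > 0")
       apply (simp add: divide_simps)
       apply algebra
      apply simp
      done
    moreover have "y^2/((1+y)*(2+y)^2) \<ge> 0" using y by simp
    ultimately show "\<exists>d. (?f has_real_derivative d) (at y) \<and> 0 \<le> d" by blast
  qed
  then show ?thesis by simp
qed

lemma ln_upper12:
  fixes x :: real assumes "0 \<le> x" shows "ln (1+x) \<le> x*(12+12*x+x^2)/(6*(2+x)*(1+x))"
proof -
  let ?f = "\<lambda>x::real. x*(12+12*x+x^2)/(6*(2+x)*(1+x)) - ln (1+x)"
  have "?f 0 \<le> ?f x"
  proof (rule DERIV_nonneg_imp_nondecreasing[OF assms])
    fix y :: real assume y0: "0 \<le> y" and "y \<le> x"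
    have y: "0 \<le> y \<and> y \<le> x" using y0 \<open>y \<le> x\<close> by simp
    have "(?f has_real_derivative (y^4/(6*(1+y)^2*(2+y)^2))) (at y)"
      using y apply (auto intro!: derivative_eq_intros)
      apply (subgoal_tac "1+y > 0 \<and> 2+y > 0 \<and> 12+6*y > 0")
       apply (simp add: divide_simps)
       apply algebra
      apply simp
      done
    moreover have "y^4/(6*(1+y)^2*(2+y)^2) \<ge> 0" using y by simp
    ultimately show "\<exists>d. (?f has_real_derivative d) (at y) \<and> 0 \<le> d" by blast
  qed
  then show ?thesis by simp
qed

lemma ln_upper2:
  fixes x :: real assumes "0 \<le> x" shows "ln (1+x) \<le> x*(2+x)/(2*(1+x))"
proof -
  let ?f = "\<lambda>x::real. x*(2+x)/(2*(1+x)) - ln (1+x)"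
  have "?f 0 \<le> ?f x"
  proof (rule DERIV_nonneg_imp_nondecreasing[OF assms])
    fix y :: real assume y0: "0 \<le> y" and "y \<le> x"
    have y: "0 \<le> y \<and> y \<le> x" using y0 \<open>y \<le> x\<close> by simp
    have "(?f has_real_derivative (y^2/(2*(1+y)^2))) (at y)"
      using y apply (auto intro!: derivative_eq_intros)
      apply (subgoal_tac "1+y > 0 \<and> 2+2*y > 0")
       apply (simp add: divide_simps)
       apply algebra
      apply simp
      done
    moreover have "y^2/(2*(1+y)^2) \<ge> 0" using y by simp
    ultimately show "\<exists>d. (?f has_real_derivative d) (at y) \<and> 0 \<le> d" by blast
  qed
  then show ?thesis by simp
qed

definition hS :: "nat \<Rightarrow> real" where
  "hS N = ln (fact N) - (real N + 1/2) * ln (real N) + real N"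

lemma hS_step:
  assumes "j \<ge> 1"
  shows "hS j - hS (Suc j) = (real j + 1/2) * ln (1 + 1/real j) - 1"
proof -
  have j: "real j > 0" using assms by simp
  have A: "ln (fact (Suc j) :: real) = ln (real j + 1) + ln (fact j)"
    by (simp add: ln_mult add.commute)
  have B: "ln (1 + 1/real j) = ln (real j + 1) - ln (real j)"
  proof -
    have e: "1 + 1/real j = (real j+1)/real j" using j by (simp add: field_simps)
    show ?thesis unfolding e by (rule ln_divide_pos) (use j in auto)
  qed
  show ?thesis unfolding hS_def A B by (simp add: algebra_simps)
qed

lemma hS_step_bounds:
  assumes "j \<ge> 1"
  shows "0 \<le> hS j - hS (Suc j)" "hS j - hS (Suc j) \<le> 1/(12*real j) - 1/(12*real (Suc j))"
proof -
  have j: "real j > 0" using assms by simp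
  define x where "x = 1 / real j"
  have x: "x > 0" using j by (simp add: x_def)
  have "(real j + 1/2) * (2*x/(2+x)) \<le> (real j + 1/2) * ln (1+x)"
    by (rule mult_left_mono[OF ln_lower2]) (use x in auto)
  moreover have "(real j + 1/2) * (2*x/(2+x)) = 1" using j unfolding x_def by (simp add: field_simps)
  ultimately show "0 \<le> hS j - hS (Suc j)" using hS_step[OF assms] unfolding x_def by simp
  have "(real j + 1/2) * ln (1+x) \<le> (real j + 1/2) * (x*(12+12*x+x^2)/(6*(2+x)*(1+x)))"
    by (rule mult_left_mono[OF ln_upper12]) (use x in auto)
  moreover have "(real j + 1/2) * (x*(12+12*x+x^2)/(6*(2+x)*(1+x))) = 1 + 1/(12*real j) - 1/(12*real (Suc j))"
    using j unfolding x_def apply (simp add: divide_simps) by algebra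
  ultimately show "hS j - hS (Suc j) \<le> 1/(12*real j) - 1/(12*real (Suc j))"
    using hS_step[OF assms] unfolding x_def by simp
qed

lemma hS_mono:
  assumes "1 \<le> M" "M \<le> N"
  shows "hS N \<le> hS M \<and> hS M - 1/(12*real M) \<le> hS N - 1/(12*real N)"
  using assms(2)
proof (induction N rule: dec_induct)
  case base
  then show ?case by simp
next
  case (step N)
  have "N \<ge> 1" using step assms by simp
  from hS_step_bounds[OF this] step.IH show ?case by simp
qed

lemma hS_ratio:
  assumes "2 \<le> M" "M \<le> N"
  shows "hS M - 1/24 \<le> hS N"
proof -
  have "hS M - 1/(12*real M) \<le> hS N - 1/(12*real N)" using hS_mono[of M N] assms by simp
  moreover have "1/(12*real M) \<le> 1/24" using assms(1) by (simp add: field_simps)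
  moreover have "1/(12*real N) \<ge> 0" by simp
  ultimately show ?thesis by linarith
qed

lemma ident:
  fixes m a t b lI lT lC lA lB lN hI hT hC hA hB hN :: real
  shows "(hI + (m+a+1/2)*lI - (m+a)) + (hT + (t+b+1/2)*lT - (t+b)) + (hC + (a+b+1/2)*lC - (a+b))
     + (m+t)*lN - (hA + (a+1/2)*lA - a) - (hB + (b+1/2)*lB - b)
     - (hN + (m+a+t+b+1/2)*lN - (m+a+t+b)) - m*lI - t*lT
   = (hI+hT+hC-hA-hB-hN) + (lI+lT+lC-lA-lB-lN)/2 + a*(lI+lC-lN-lA) + b*(lT+lC-lN-lB)"
  by (simp add: field_simps)

lemma core:
  fixes m a t b :: nat
  assumes a2: "a \<ge> 2" and b2: "b \<ge> 2"
    and d0: "real (m+a) * real (m+t) / real (m+a+t+b) \<le> real m"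
    and d1: "real m - 1 < real (m+a) * real (m+t) / real (m+a+t+b)"
    and hb: "real (t+b) * real (a+b) / real (m+a+t+b) > 1"
  shows "exp (-1/8) / 2 * sqrt (real (m+a) * real (t+b) * real (a+b) / (real a * real b * real (m+a+t+b)))
    \<le> fact (m+a) * fact (t+b) * fact (a+b) * real (m+a+t+b) ^ (m+t)
       / (fact a * fact b * fact (m+a+t+b) * real (m+a) ^ m * real (t+b) ^ t)"
proof -
  define n where "n = m+a+t+b"
  define I where "I = real (m+a)"
  define T where "T = real (t+b)"
  define C where "C = real (a+b)"
  define A where "A = real a"
  define B where "B = real b"
  define N where "N = real n"
  define K where "K = real (m+t)"
  define \<delta> where "\<delta> = real m - I*K/N"
  have N: "N = real m + A + real t + B" by (simp add: N_def n_def A_def B_def)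
  have Apos: "A \<ge> 2" "B \<ge> 2" using a2 b2 by (auto simp: A_def B_def)
  have Npos: "N > 0" using N Apos by simp
  have Ipos: "I > 0" "T > 0" "C > 0" using Apos by (auto simp: I_def T_def C_def A_def B_def)
  have dA: "A + \<delta> = I*C/N"
    using Npos unfolding \<delta>_def I_def C_def K_def N by (simp add: field_simps A_def B_def)
  have dB: "B - \<delta> = T*C/N"
    using Npos unfolding \<delta>_def T_def I_def C_def K_def N by (simp add: field_simps A_def B_def)
  have \<delta>0: "0 \<le> \<delta>" "\<delta> < 1" using d0 d1 unfolding \<delta>_def I_def K_def N_def n_def by auto
  have \<beta>: "B - \<delta> > 1" using hb dB unfolding T_def C_def N_def n_def by simp
  have E1: "A * ln (I*C/(N*A)) \<ge> \<delta> - 1/5"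
  proof -
    have e: "I*C/(N*A) = 1 + \<delta>/A" using dA Apos by (simp add: field_simps)
    have "2*(\<delta>/A)/(2+\<delta>/A) \<le> ln (1 + \<delta>/A)" by (rule ln_lower2) (use \<delta>0 Apos in simp)
    moreover have "2*(\<delta>/A)/(2+\<delta>/A) = 2*\<delta>/(2*A+\<delta>)" using Apos by (simp add: field_simps)
    ultimately have "A * (2*\<delta>/(2*A+\<delta>)) \<le> A * ln (1 + \<delta>/A)"
      using Apos by (intro mult_left_mono) auto
    moreover have "\<delta> - 1/5 \<le> A * (2*\<delta>/(2*A+\<delta>))"
    proof -
      have "\<delta>*\<delta> \<le> \<delta>" using \<delta>0 by (metis less_eq_real_def mult_left_le mult_le_cancel_left1)
      then have "(\<delta> - 1/5)*(2*A+\<delta>) \<le> A*(2*\<delta>)" using Apos \<delta>0 by (simp add: algebra_simps)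
      then show ?thesis using Apos \<delta>0 by (simp add: field_simps)
    qed
    ultimately show ?thesis unfolding e by linarith
  qed
  have E2: "B * ln (T*C/(N*B)) \<ge> -\<delta> - 1/2"
  proof -
    define x where "x = \<delta>/(B-\<delta>)"
    have x0: "x \<ge> 0" using \<delta>0 \<beta> by (simp add: x_def)
    have e: "T*C/(N*B) = (B-\<delta>)/B" using dB Apos by (simp add: field_simps)
    have e2: "1 + x = B/(B-\<delta>)" using \<beta> by (simp add: x_def field_simps)
    have "ln ((B-\<delta>)/B) = - ln (1+x)" unfolding e2 using \<beta> Apos
      by (simp add: ln_divide_pos)
    moreover have "ln (1+x) \<le> x*(2+x)/(2*(1+x))" by (rule ln_upper2[OF x0])
    moreover have "B * (x*(2+x)/(2*(1+x))) = \<delta> + \<delta>*\<delta>/(2*(B-\<delta>))"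
    proof -
      define D where "D = B - \<delta>"
      have D: "D > 0" "B = D + \<delta>" using \<beta> by (auto simp: D_def)
      have "(D+\<delta>) * ((\<delta>/D)*(2+\<delta>/D)/(2*(1+\<delta>/D))) = \<delta> + \<delta>*\<delta>/(2*D)"
        using D(1) \<delta>0(1) apply (simp add: divide_simps) by (simp add: algebra_simps)
      then show ?thesis unfolding x_def D_def[symmetric] D(2)[symmetric] by simp
    qed
    moreover have "\<delta>*\<delta>/(2*(B-\<delta>)) \<le> 1/2"
    proof -
      have "\<delta>*\<delta> \<le> 1" using \<delta>0 by (simp add: mult_le_one)
      then show ?thesis using \<beta> by (simp add: field_simps)
    qed
    ultimately have "B * ln (1+x) \<le> \<delta> + 1/2" using Apos
      by (smt (verit, best) mult_left_mono)
    then show ?thesis unfolding e using \<open>ln ((B-\<delta>)/B) = - ln (1+x)\<close> by simp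
  qed
  have ln2: "ln 2 \<ge> (2/3::real)" using ln_lower2[of 1] by simp
  have H1: "hS (m+a) \<ge> hS n" using hS_mono[of "m+a" n] a2 by (simp add: n_def)
  have H2: "hS (t+b) \<ge> hS b - 1/24" using hS_ratio[of b "t+b"] b2 by simp
  have H3: "hS (a+b) \<ge> hS a - 1/24" using hS_ratio[of a "a+b"] a2 by simp
  define R where "R = fact (m+a) * fact (t+b) * fact (a+b) * real n ^ (m+t)
       / (fact a * fact b * fact n * real (m+a) ^ m * real (t+b) ^ t)"
  define S where "S = I * T * C / (A * B * N)"
  have Rpos: "R > 0" unfolding R_def n_def using a2 b2 by simp
  have Spos: "S > 0" unfolding S_def using Ipos Apos Npos by simp
  have lnR: "ln R = ln (fact (m+a)) + ln (fact (t+b)) + ln (fact (a+b)) + real (m+t) * ln N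
     - ln (fact a) - ln (fact b) - ln (fact n) - real m * ln I - real t * ln T"
    unfolding R_def N_def I_def T_def using a2 b2 Npos Ipos
    by (simp add: ln_mult ln_div ln_realpow n_def I_def T_def N_def)
  have lnS: "ln S = ln I + ln T + ln C - ln A - ln B - ln N"
    unfolding S_def using Ipos Apos Npos by (simp add: ln_mult ln_div)
  have lE1: "ln (I*C/(N*A)) = ln I + ln C - ln N - ln A"
    using Ipos Apos Npos by (simp add: ln_mult ln_div)
  have lE2: "ln (T*C/(N*B)) = ln T + ln C - ln N - ln B"
    using Ipos Apos Npos by (simp add: ln_mult ln_div)
  have fI: "ln (fact (m+a)) = hS (m+a) + (real m + A + 1/2) * ln I - (real m + A)"
    unfolding hS_def I_def A_def by simp
  have fT: "ln (fact (t+b)) = hS (t+b) + (real t + B + 1/2) * ln T - (real t + B)"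
    unfolding hS_def T_def B_def by simp
  have fC: "ln (fact (a+b)) = hS (a+b) + (A + B + 1/2) * ln C - (A + B)"
    unfolding hS_def C_def A_def B_def by simp
  have fA: "ln (fact a) = hS a + (A + 1/2) * ln A - A"
    unfolding hS_def A_def by simp
  have fB: "ln (fact b) = hS b + (B + 1/2) * ln B - B"
    unfolding hS_def B_def by simp
  have fN: "ln (fact n) = hS n + (real m + A + real t + B + 1/2) * ln N - (real m + A + real t + B)"
    unfolding hS_def N[symmetric] by (simp add: N_def)
  have key: "ln R = (hS (m+a) + hS (t+b) + hS (a+b) - hS a - hS b - hS n) + ln S / 2
     + A * ln (I*C/(N*A)) + B * ln (T*C/(N*B))"
    unfolding lnR lnS lE1 lE2 fI fT fC fA fB fN of_nat_add
    using ident[of "hS (m+a)" "real m" A "ln I" "hS (t+b)" "real t" B "ln T" "hS (a+b)" "ln C"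
        "ln N" "hS a" "ln A" "hS b" "ln B" "hS n"]
    by simp
  have lower: "ln R \<ge> -1/8 - ln 2 + ln S / 2"
    using key E1 E2 H1 H2 H3 ln2 \<delta>0 by linarith
  have "exp (-1/8) / 2 * sqrt S = exp (-1/8 - ln 2 + ln S / 2)"
  proof -
    have "sqrt S = exp (ln S / 2)" using Spos by (simp add: ln_sqrt[symmetric])
    then show ?thesis by (simp add: exp_add exp_diff)
  qed
  also have "\<dots> \<le> exp (ln R)" using lower by simp
  also have "\<dots> = R" using Rpos by simp
  finally show ?thesis unfolding R_def S_def I_def T_def C_def A_def B_def N_def n_def .
qed

lemma ratio_eq:
  fixes m a t b :: nat
  assumes "b \<ge> 1" "a \<ge> 1"
  shows "hyp_prob (m+a+t+b) (m+a) (m+t) m / pmf (binomial_pmf (m+t) (real (m+a) / real (m+a+t+b))) m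
   = fact (m+a) * fact (t+b) * fact (a+b) * real (m+a+t+b) ^ (m+t)
       / (fact a * fact b * fact (m+a+t+b) * real (m+a) ^ m * real (t+b) ^ t)"
proof -
  define n where "n = m+a+t+b"
  have np: "real n > 0" using assms by (simp add: n_def)
  have p: "0 \<le> real (m+a) / real n" "real (m+a) / real n \<le> 1" using np by (auto simp: n_def)
  have q: "1 - real (m+a) / real n = real (t+b) / real n" using np by (simp add: n_def field_simps)
  have c1: "real ((m+a) choose m) = fact (m+a) / (fact m * fact a)"
    by (subst binomial_fact) auto
  have c2: "real ((t+b) choose t) = fact (t+b) / (fact t * fact b)"
    by (subst binomial_fact) auto
  have c3: "real (n choose (m+t)) = fact n / (fact (m+t) * fact (a+b))"
    by (subst binomial_fact) (auto simp: n_def)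
  have c4: "real ((m+t) choose m) = fact (m+t) / (fact m * fact t)"
    by (subst binomial_fact) auto
  have s: "n - (m+a) = t+b" "m+t-m = t" by (auto simp: n_def)
  show ?thesis
    unfolding n_def[symmetric] hyp_prob_def pmf_binomial[OF p] q s of_nat_mult c1 c2 c3 c4
    using np by (simp add: field_simps power_divide power_add)
qed

theorem lemma4:
  fixes n i k m :: nat
  assumes "n \<ge> 1" and "i \<in> {1..n}" and "k \<in> {1..n}"
    and "2 \<le> m" and "m \<le> min i k - 2"
    and "real m - 1 < real i * real k / real n" and "real i * real k / real n \<le> real m"
    and "(real n - real i) * (real n - real k) / real n > 1"
  shows "hyp_prob n i k m / pmf (binomial_pmf k (real i / real n)) m
    \<ge> exp (-1/8) / 2 * sqrt (real i * (real n - real i) * (real n - real k) /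
        ((real i - real m) * (real n - real i - real k + real m) * real n))"
proof -
  have m2: "m + 2 \<le> i" "m + 2 \<le> k" using assms(4,5) by auto
  have np: "real n > 0" using assms(1) by simp
  have e: "(real n - real i)*(real n - real k)/real n = real n - real i - real k + real i*real k/real n"
    using np by (simp add: field_simps)
  have "real (i+k+1) < real (n+m)" using e assms(7,8) by simp
  then have nb: "i+k+1 < n+m" by (simp only: of_nat_less_iff)
  obtain a t b where i: "i = m+a" and k: "k = m+t" and n: "n = m+a+t+b" and a2: "a \<ge> 2" and b2: "b \<ge> 2"
  proof
    show "i = m + (i-m)" using m2 by simp
    show "k = m + (k-m)" using m2 by simp
    show "n = m + (i-m) + (k-m) + (n+m-i-k)" using m2 nb by simp
    show "i - m \<ge> 2" using m2 by simp
    show "n+m-i-k \<ge> 2" using nb by simp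
  qed
  have d0: "real (m+a) * real (m+t) / real (m+a+t+b) \<le> real m" using assms(7) unfolding i k n .
  have d1: "real m - 1 < real (m+a) * real (m+t) / real (m+a+t+b)" using assms(6) unfolding i k n .
  have hb: "real (t+b) * real (a+b) / real (m+a+t+b) > 1" using assms(8) unfolding i k n by simp
  have arg: "real (m+a) * (real (m+a+t+b) - real (m+a)) * (real (m+a+t+b) - real (m+t)) /
        ((real (m+a) - real m) * (real (m+a+t+b) - real (m+a) - real (m+t) + real m) * real (m+a+t+b))
     = real (m+a) * real (t+b) * real (a+b) / (real a * real b * real (m+a+t+b))"
    by simp
  have r: "hyp_prob (m+a+t+b) (m+a) (m+t) m / pmf (binomial_pmf (m+t) (real (m+a) / real (m+a+t+b))) m
   = fact (m+a) * fact (t+b) * fact (a+b) * real (m+a+t+b) ^ (m+t)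
       / (fact a * fact b * fact (m+a+t+b) * real (m+a) ^ m * real (t+b) ^ t)"
    by (rule ratio_eq) (use a2 b2 in auto)
  show ?thesis
    unfolding i k n arg r using core[OF a2 b2 d0 d1 hb] a2 b2 by simp
qed

end
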